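(* Assume $\mathrm{Unif}(\mathcal S)$ and $\mathfrak d=\mathfrak c$. Then there exists a strong measure zero set $X\subseteq\mathbb R$ with $|X|=\mathfrak c$.
   Context: $\mathfrak c=2^{\aleph_0}$. A set $X\subseteq\mathbb R$ has strong measure zero if for every sequence $\langle\varepsilon_i:i<\omega\rangle$ of positive reals there is a sequence $\langle x_i:i<\omega\rangle$ of reals with $X\subseteq\bigcup_{i<\omega}(x_i-\varepsilon_i,x_i+\varepsilon_i)$. $\mathcal S$ denotes the ideal of strong measure zero sets. $\mathrm{Unif}(\mathcal S)$ is the statement "every set of reals of cardinality less than $\mathfrak c$ has strong measure zero". $\mathfrak d$ is the least cardinality of a family $\mathcal H\subseteq\omega^\omega$ such that for every $g\in\omega^\omega$ there is $h\in\mathcal H$ with $g(n)<h(n)$ for all $n$. *)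

theory Defs
  imports Complex_Main "HOL-Library.Equipollence"
begin

definition strong_measure_zero :: "real set \<Rightarrow> bool" where
  "strong_measure_zero X \<longleftrightarrow>
     (\<forall>\<epsilon> :: nat \<Rightarrow> real. (\<forall>i. 0 < \<epsilon> i) \<longrightarrow>
        (\<exists>x :: nat \<Rightarrow> real. X \<subseteq> (\<Union>i. {x i - \<epsilon> i <..< x i + \<epsilon> i})))"

definition Unif_S :: bool where
  "Unif_S \<longleftrightarrow> (\<forall>X :: real set. X \<prec> (UNIV :: real set) \<longrightarrow> strong_measure_zero X)"

definition dominating :: "(nat \<Rightarrow> nat) set \<Rightarrow> bool" where
  "dominating H \<longleftrightarrow> (\<forall>g :: nat \<Rightarrow> nat. \<exists>h\<in>H. \<forall>n. g n < h n)"

text \<open>d = c: the least cardinality of a dominating family equals the continuum.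
  Since the whole Baire space is a dominating family of size c, this says
  exactly that no dominating family has cardinality less than c.\<close>
definition d_eq_c :: bool where
  "d_eq_c \<longleftrightarrow> (\<forall>H. dominating H \<longrightarrow> \<not> (H \<prec> (UNIV :: real set)))"

end

theory Submission
  imports Defs
begin

definition pt :: "(nat \<Rightarrow> nat) \<Rightarrow> real" where
  "pt c = (\<Sum>j. (1/2::real)^(c j))"

definition gap :: "(nat \<Rightarrow> nat) \<Rightarrow> bool" where
  "gap c \<longleftrightarrow> (\<forall>j. c j + 2 \<le> c (Suc j))"

lemma gap_add: "gap c \<Longrightarrow> c p + 2*i \<le> c (i + p)"
proof (induction i)
  case 0 then show ?case by simp
next
  case (Suc i)
  then have "c (i+p) + 2 \<le> c (Suc (i+p))" by (simp add: gap_def)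
  with Suc show ?case by simp
qed

lemma term_le: "gap c \<Longrightarrow> (1/2::real)^(c (j+p)) \<le> (1/2)^(c p) * (1/4)^j"
proof -
  assume g: "gap c"
  have "(1/2::real)^(c (j+p)) \<le> (1/2)^(c p + 2*j)"
    by (rule power_decreasing) (use gap_add[OF g, of p j] in auto)
  also have "\<dots> = (1/2)^(c p) * (1/4)^j"
    by (simp add: power_add power_mult power2_eq_square)
  finally show ?thesis .
qed

lemma geo_summ: "summable (\<lambda>j. (1/2::real)^(c p) * (1/4)^j)"
  by (intro summable_mult summable_geometric) simp

lemma tail_summ: "gap c \<Longrightarrow> summable (\<lambda>j. (1/2::real)^(c (j+p)))"
  by (rule summable_comparison_test[OF _ geo_summ[of c p]]) (use term_le in auto)

lemma pt_summ: "gap c \<Longrightarrow> summable (\<lambda>j. (1/2::real)^(c j))"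
  using tail_summ[of c 0] by simp

lemma tail_le: "gap c \<Longrightarrow> (\<Sum>j. (1/2::real)^(c (j+p))) \<le> 4/3 * (1/2)^(c p)"
proof -
  assume g: "gap c"
  have "(\<Sum>j. (1/2::real)^(c (j+p))) \<le> (\<Sum>j. (1/2::real)^(c p) * (1/4)^j)"
    by (rule suminf_le) (use term_le[OF g] tail_summ[OF g] geo_summ in auto)
  also have "\<dots> = (1/2)^(c p) * (\<Sum>j. (1/4::real)^j)"
    by (rule suminf_mult) (rule summable_geometric, simp)
  also have "(\<Sum>j. (1/4::real)^j) = 4/3"
    by (subst suminf_geometric) auto
  finally show ?thesis by simp
qed

lemma tail_ge: "gap c \<Longrightarrow> (1/2::real)^(c p) \<le> (\<Sum>j. (1/2::real)^(c (j+p)))"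
  using sum_le_suminf[OF tail_summ[of c p], of "{0}"] by auto

lemma pt_split: "gap c \<Longrightarrow> pt c = (\<Sum>j. (1/2::real)^(c (j+k))) + (\<Sum>i<k. (1/2)^(c i))"
  unfolding pt_def by (rule suminf_split_initial_segment[OF pt_summ])

lemma pt_less: assumes "gap c" "gap c'" "c j < c' j" "\<forall>i<j. c i = c' i"
  shows "pt c' < pt c"
proof -
  have e: "(\<Sum>i<j. (1/2::real)^(c i)) = (\<Sum>i<j. (1/2)^(c' i))"
    using assms(4) by simp
  have "(\<Sum>i. (1/2::real)^(c' (i+j))) \<le> 4/3 * (1/2)^(c' j)" by (rule tail_le[OF assms(2)])
  also have "(1/2::real)^(c' j) \<le> (1/2)^(Suc (c j))"
    by (rule power_decreasing) (use assms(3) in auto)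
  also have "4/3 * (1/2::real)^(Suc (c j)) < (1/2)^(c j)" by simp
  also have "\<dots> \<le> (\<Sum>i. (1/2::real)^(c (i+j)))" by (rule tail_ge[OF assms(1)])
  finally show ?thesis using pt_split[OF assms(1), of j] pt_split[OF assms(2), of j] e by simp
qed

lemma pt_inj: assumes "gap c" "gap c'" "pt c = pt c'" shows "c = c'"
proof (rule ccontr)
  assume "c \<noteq> c'"
  then have ex: "\<exists>j. c j \<noteq> c' j" by auto
  define j where "j = (LEAST j. c j \<noteq> c' j)"
  have j1: "c j \<noteq> c' j" unfolding j_def by (rule LeastI_ex[OF ex])
  have j2: "\<forall>i<j. c i = c' i" unfolding j_def using not_less_Least by blast
  show False
  proof (cases "c j < c' j")
    case True then show ?thesis using pt_less[OF assms(1,2) True j2] assms(3) by simp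
  next
    case False then have "c' j < c j" using j1 by simp
    then show ?thesis using pt_less[OF assms(2,1)] j2 assms(3) by fastforce
  qed
qed


fun lv :: "(nat \<Rightarrow> nat \<Rightarrow> nat) \<Rightarrow> nat \<Rightarrow> nat" where
  "lv a 0 = 0"
| "lv a (Suc j) = lv a j + 2 + a j (lv a j)"

lemma gap_lv: "gap (lv a)" by (simp add: gap_def)

fun mm :: "(nat \<Rightarrow> nat \<Rightarrow> nat) \<Rightarrow> nat \<Rightarrow> nat" where
  "mm a 0 = 1"
| "mm a (Suc j) = mm a j * 2^(2 + a j (lv a j)) + 1"

lemma mm_sum: "(\<Sum>i<Suc j. (1/2::real)^(lv a i)) = real (mm a j) / 2^(lv a j)"
proof (induction j)
  case 0 then show ?case by simp
next
  case (Suc j)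
  define d where "d = 2 + a j (lv a j)"
  have l: "lv a (Suc j) = lv a j + d" by (simp add: d_def)
  have "(\<Sum>i<Suc (Suc j). (1/2::real)^(lv a i)) = real (mm a j) / 2^(lv a j) + (1/2)^(lv a j + d)"
    by (simp only: sum.lessThan_Suc[of _ "Suc j"] Suc.IH l)
  also have "(1/2::real)^(lv a j + d) = 1 / (2^(lv a j) * 2^d)"
    by (simp add: power_add power_one_over)
  also have "real (mm a j) / 2^(lv a j) + 1 / (2^(lv a j) * 2^d) = real (mm a j * 2^d + 1) / (2^(lv a j) * 2^d)"
    by (simp add: field_simps)
  also have "mm a j * 2^d + 1 = mm a (Suc j)" unfolding d_def by simp
  also have "(2::real)^(lv a j) * 2^d = 2^(lv a (Suc j))" by (simp only: l power_add)
  finally show ?case .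
qed

lemma mm_bound: "mm a j + 1 \<le> 2^(lv a j + 1)"
proof (induction j)
  case 0 then show ?case by simp
next
  case (Suc j)
  define d where "d = 2 + a j (lv a j)"
  have l: "lv a (Suc j) = lv a j + d" by (simp add: d_def)
  have d2: "(2::nat) \<le> 2^d" unfolding d_def by (simp add: power_add)
  have "mm a (Suc j) + 1 = mm a j * 2^d + 2" unfolding d_def by simp
  also have "\<dots> \<le> mm a j * 2^d + 2^d" using d2 by simp
  also have "\<dots> = (mm a j + 1) * 2^d" by (simp add: algebra_simps)
  also have "\<dots> \<le> 2^(lv a j + 1) * 2^d" by (rule mult_right_mono[OF Suc.IH]) simp
  also have "\<dots> = 2^(lv a (Suc j) + 1)" unfolding l by (simp add: power_add)
  finally show ?case .
qed

definition G0 :: "(nat \<Rightarrow> nat) \<Rightarrow> nat \<Rightarrow> nat" where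
  "G0 g n = (\<Sum>m\<le>2^(n+1). g (2 * prod_encode (n, m)))"

definition GG :: "(nat \<Rightarrow> nat) \<Rightarrow> nat \<Rightarrow> nat" where
  "GG g n = (\<Sum>p\<le>n. G0 g p)"

lemma GG_mono: "mono (GG g)"
  unfolding mono_def GG_def by (auto intro: sum_mono2)

lemma g_le_GG: "m \<le> 2^(n+1) \<Longrightarrow> g (2 * prod_encode (n, m)) \<le> GG g n"
proof -
  assume m: "m \<le> 2^(n+1)"
  have "g (2 * prod_encode (n, m)) \<le> G0 g n" unfolding G0_def
    by (rule member_le_sum[of m "{..2^(n+1)}" "\<lambda>m. g (2 * prod_encode (n, m))"]) (use m in auto)
  also have "\<dots> \<le> GG g n" unfolding GG_def
    by (rule member_le_sum) auto
  finally show ?thesis .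
qed

definition Cov :: "(nat \<Rightarrow> nat) \<Rightarrow> real set" where
  "Cov g = {t. \<exists>n m. m \<le> 2^(n+1) \<and> \<bar>t - real m / 2^n\<bar> < (1/2)^(GG g n)}"

definition ctr :: "nat \<Rightarrow> real" where
  "ctr i = real (snd (prod_decode i)) / 2^(fst (prod_decode i))"

lemma Cov_sub: "Cov g \<subseteq> (\<Union>i. {ctr i - (1/2)^(g (2*i)) <..< ctr i + (1/2)^(g (2*i))})"
proof
  fix t assume "t \<in> Cov g"
  then obtain n m where m: "m \<le> 2^(n+1)" and t: "\<bar>t - real m / 2^n\<bar> < (1/2)^(GG g n)"
    unfolding Cov_def by auto
  define i where "i = prod_encode (n, m)"
  have c: "ctr i = real m / 2^n" unfolding ctr_def i_def by simp
  have le: "(1/2::real)^(GG g n) \<le> (1/2)^(g (2*i))"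
    by (rule power_decreasing) (use g_le_GG[OF m, of g] i_def in auto)
  have t1: "t - real m / 2^n < (1/2)^(GG g n)" "- ((1/2)^(GG g n)) < t - real m / 2^n"
    using t unfolding abs_less_iff by linarith+
  have "ctr i - (1/2)^(g (2*i)) < t \<and> t < ctr i + (1/2)^(g (2*i))"
    using t1 c le by linarith
  then show "t \<in> (\<Union>i. {ctr i - (1/2)^(g (2*i)) <..< ctr i + (1/2)^(g (2*i))})"
    by (intro UN_I[of i UNIV]) auto
qed

lemma pt_cov: assumes "GG g (lv a j) + 2 \<le> lv a (Suc j)" shows "pt (lv a) \<in> Cov g"
proof -
  let ?c = "lv a"
  have sp: "pt ?c = (\<Sum>i. (1/2::real)^(?c (i + Suc j))) + real (mm a j) / 2^(lv a j)"
    using pt_split[of "lv a" "Suc j"] gap_lv mm_sum[of a j] by simp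
  have t0: "0 \<le> (\<Sum>i. (1/2::real)^(?c (i + Suc j)))"
    by (rule suminf_nonneg[OF tail_summ[OF gap_lv]]) simp
  have "(\<Sum>i. (1/2::real)^(?c (i + Suc j))) \<le> 4/3 * (1/2)^(?c (Suc j))"
    by (rule tail_le[OF gap_lv])
  also have "(1/2::real)^(?c (Suc j)) \<le> (1/2)^(GG g (lv a j) + 2)"
    by (rule power_decreasing) (use assms in auto)
  also have "4/3 * (1/2::real)^(GG g (lv a j) + 2) < (1/2)^(GG g (lv a j))"
    by (simp add: power_add)
  finally have lt: "(\<Sum>i. (1/2::real)^(?c (i + Suc j))) < (1/2)^(GG g (lv a j))" by simp
  have mb: "mm a j \<le> 2^(lv a j + 1)" using mm_bound[of a j] by simp
  have df: "pt ?c - real (mm a j) / 2^(lv a j) = (\<Sum>i. (1/2::real)^(?c (i + Suc j)))"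
    using sp by linarith
  have ab: "\<bar>pt ?c - real (mm a j) / 2^(lv a j)\<bar> < (1/2)^(GG g (lv a j))"
    unfolding df using t0 lt by linarith
  show ?thesis unfolding Cov_def mem_Collect_eq
    by (intro exI[of _ "lv a j"] exI[of _ "mm a j"] conjI mb ab)
qed

lemma lv_ge: "j \<le> lv a j"
  using gap_add[OF gap_lv, of a 0 j] by simp

lemma lv_bracket: "\<exists>j. lv a j \<le> n \<and> n < lv a (Suc j)"
proof (induction n)
  case 0 then show ?case by (intro exI[of _ 0]) simp
next
  case (Suc n)
  then obtain j where j: "lv a j \<le> n" "n < lv a (Suc j)" by auto
  show ?case
  proof (cases "Suc n < lv a (Suc j)")
    case True with j show ?thesis by (intro exI[of _ j]) simp
  next
    case False
    then have "Suc n = lv a (Suc j)" using j by simp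
    then show ?thesis by (intro exI[of _ "Suc j"]) simp
  qed
qed

lemma beat:
  assumes H: "mono (H :: nat \<Rightarrow> nat)" and w: "H (H n) \<le> k n"
    and a: "\<And>j p. (\<Sum>i\<le>p. k i) \<le> a j p"
  shows "\<exists>j. H (lv a j) \<le> lv a (Suc j)"
proof (rule ccontr)
  assume no: "\<not> ?thesis"
  obtain j where j: "lv a j \<le> n" "n < lv a (Suc j)" using lv_bracket by blast
  have no': "lv a (Suc i) < H (lv a i)" for i using no not_le by blast
  have 1: "lv a (Suc j) \<le> H (lv a j)" using no'[of j] by (rule less_imp_le)
  have 2: "lv a (Suc (Suc j)) < H (lv a (Suc j))" by (rule no')
  have "H (lv a (Suc j)) \<le> H (H (lv a j))" using H 1 by (simp add: monoD)
  also have "\<dots> \<le> H (H n)" using H j(1) by (simp add: monoD)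
  also have "\<dots> \<le> k n" by (rule w)
  also have "k n \<le> (\<Sum>i\<le>lv a (Suc j). k i)"
    by (rule member_le_sum) (use j in auto)
  also have "\<dots> \<le> a (Suc j) (lv a (Suc j))" by (rule a)
  also have "\<dots> \<le> lv a (Suc (Suc j))" by (simp only: lv.simps)
  finally show False using 2 by linarith
qed


lemma smz_red:
  assumes "\<And>g::nat\<Rightarrow>nat. \<exists>y. X \<subseteq> (\<Union>i. {y i - (1/2)^(g i) <..< y i + (1/2)^(g i)})"
  shows "strong_measure_zero X"
  unfolding strong_measure_zero_def
proof (intro allI impI)
  fix \<epsilon> :: "nat \<Rightarrow> real" assume pos: "\<forall>i. 0 < \<epsilon> i"
  define g where "g i = (LEAST e. (1/2::real)^e < \<epsilon> i)" for i
  have gl: "(1/2::real)^(g i) < \<epsilon> i" for i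
    unfolding g_def by (rule LeastI_ex) (use real_arch_pow_inv[of "\<epsilon> i" "1/2"] pos in auto)
  obtain y where y: "X \<subseteq> (\<Union>i. {y i - (1/2)^(g i) <..< y i + (1/2)^(g i)})" using assms by blast
  have "X \<subseteq> (\<Union>i. {y i - \<epsilon> i <..< y i + \<epsilon> i})"
  proof
    fix t assume "t \<in> X"
    then obtain i where "t \<in> {y i - (1/2)^(g i) <..< y i + (1/2)^(g i)}" using y by blast
    then have "t \<in> {y i - \<epsilon> i <..< y i + \<epsilon> i}" using gl[of i] by simp
    then show "t \<in> (\<Union>i. {y i - \<epsilon> i <..< y i + \<epsilon> i})" by (intro UN_I[of i UNIV]) auto
  qed
  then show "\<exists>x. X \<subseteq> (\<Union>i. {x i - \<epsilon> i <..< x i + \<epsilon> i})" by (intro exI[of _ y])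
qed

lemma combine:
  fixes y0 y1 e :: "nat \<Rightarrow> real"
  assumes A: "A \<subseteq> (\<Union>i. {y1 i - e (2*i+1) <..< y1 i + e (2*i+1)})"
    and B: "B \<subseteq> (\<Union>i. {y0 i - e (2*i) <..< y0 i + e (2*i)})"
  shows "\<exists>z. A \<union> B \<subseteq> (\<Union>i. {z i - e i <..< z i + e i})"
proof -
  define z where "z n = (if even n then y0 (n div 2) else y1 (n div 2))" for n :: nat
  have "A \<union> B \<subseteq> (\<Union>i. {z i - e i <..< z i + e i})"
  proof
    fix t assume "t \<in> A \<union> B"
    then show "t \<in> (\<Union>i. {z i - e i <..< z i + e i})"
    proof
      assume "t \<in> A"
      then obtain i where "t \<in> {y1 i - e (2*i+1) <..< y1 i + e (2*i+1)}" using A by blast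
      moreover have "z (2*i+1) = y1 i" unfolding z_def by simp
      ultimately show ?thesis by (intro UN_I[of "2*i+1" UNIV]) auto
    next
      assume "t \<in> B"
      then obtain i where "t \<in> {y0 i - e (2*i) <..< y0 i + e (2*i)}" using B by blast
      moreover have "z (2*i) = y0 i" unfolding z_def by simp
      ultimately show ?thesis by (intro UN_I[of "2*i" UNIV]) auto
    qed
  qed
  then show ?thesis by blast
qed

lemma lv_eq_a: "lv a = lv a' \<Longrightarrow> a j (lv a j) = a' j (lv a j)"
proof -
  assume e: "lv a = lv a'"
  have "lv a (Suc j) = lv a' (Suc j)" "lv a j = lv a' j" using e by simp_all
  then show ?thesis by simp
qed

lemma underS_lesspoll: "underS (card_of (UNIV::real set)) s \<prec> (UNIV::real set)"
proof -
  have o: "(card_of (underS (card_of (UNIV::real set)) s), card_of (UNIV::real set)) \<in> ordLess"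
    by (rule card_of_underS[OF card_of_Card_order]) (simp add: Field_card_of)
  have "underS (card_of (UNIV::real set)) s \<lesssim> (UNIV::real set)"
    unfolding lepoll_def using card_of_ordLeq ordLess_imp_ordLeq[OF o] by blast
  moreover have "\<not> underS (card_of (UNIV::real set)) s \<approx> (UNIV::real set)"
    unfolding eqpoll_iff_card_of_ordIso using o not_ordLess_ordIso by blast
  ultimately show ?thesis unfolding lesspoll_def by blast
qed

lemma W_total: "s \<noteq> r \<Longrightarrow> s \<notin> underS (card_of (UNIV::real set)) r \<Longrightarrow> r \<in> underS (card_of (UNIV::real set)) s"
proof -
  assume ne: "s \<noteq> r" and ns: "s \<notin> underS (card_of (UNIV::real set)) r"
  have "total_on (Field (card_of (UNIV::real set))) (card_of (UNIV::real set))"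
    using card_of_Well_order[of "UNIV::real set"] unfolding well_order_on_def linear_order_on_def by blast
  then have t: "total_on UNIV (card_of (UNIV::real set))" by (simp add: Field_card_of)
  have "(s, r) \<notin> card_of (UNIV::real set)" using ns ne unfolding underS_def by blast
  then have "(r, s) \<in> card_of (UNIV::real set)" using t ne unfolding total_on_def by blast
  then show ?thesis using ne unfolding underS_def by blast
qed

theorem theorem0p11:
  assumes "Unif_S" and "d_eq_c"
  shows "\<exists>X :: real set. strong_measure_zero X \<and> X \<approx> (UNIV :: real set)"
proof -
  let ?W = "card_of (UNIV::real set)"
  define \<iota> where "\<iota> g = pt (lv (\<lambda>j p. g j))" for g :: "nat \<Rightarrow> nat"
  have inj\<iota>: "inj \<iota>"
  proof (rule injI)
    fix g g' assume "\<iota> g = \<iota> g'"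
    then have e: "lv (\<lambda>j p. g j) = lv (\<lambda>j p. g' j)" unfolding \<iota>_def by (rule pt_inj[OF gap_lv gap_lv])
    show "g = g'"
    proof
      fix j show "g j = g' j" using lv_eq_a[OF e, of j] by simp
    qed
  qed
  define \<sigma> where "\<sigma> = inv \<iota>"
  have \<sigma>\<iota>: "\<sigma> (\<iota> g) = g" for g unfolding \<sigma>_def by (rule inv_f_f[OF inj\<iota>])
  define H where "H r n = GG (\<sigma> r) n + 2" for r n
  have Hmono: "mono (H r)" for r
    unfolding H_def mono_def using GG_mono[of "\<sigma> r"] by (simp add: mono_def)
  define f where "f r n = H r (H r n)" for r n
  have nd: "\<exists>k. \<forall>r\<in>underS ?W s. \<exists>n. f r n \<le> k n" for s
  proof -
    have "f ` underS ?W s \<prec> (UNIV::real set)"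
      by (rule lesspoll_trans1[OF image_lepoll underS_lesspoll])
    then have "\<not> dominating (f ` underS ?W s)" using assms(2) unfolding d_eq_c_def by blast
    then show ?thesis unfolding dominating_def by (auto simp: not_less)
  qed
  then obtain kk where kk: "\<And>s r. r \<in> underS ?W s \<Longrightarrow> \<exists>n. f r n \<le> kk s n" by metis
  define k' where "k' s n = kk s n + f s n" for s n
  define q where "q j = (of_rat (nat_to_rat_surj j) :: real)" for j
  define a where "a s j p = 2 * (\<Sum>i\<le>p. k' s i) + (if q j < s then 1 else 0)" for s j p
  define x where "x s = pt (lv (a s))" for s
  have cov: "x s \<in> Cov (\<sigma> r)" if rs: "r \<in> underS ?W s \<or> r = s" for s r
  proof -
    obtain n where n: "f r n \<le> k' s n"
      using rs kk[of r s] unfolding k'_def by (metis le_add1 le_add2 le_trans)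
    have "\<exists>j. H r (lv (a s) j) \<le> lv (a s) (Suc j)"
    proof (rule beat[OF Hmono])
      show "H r (H r n) \<le> k' s n" using n unfolding f_def .
      fix j p show "(\<Sum>i\<le>p. k' s i) \<le> a s j p" unfolding a_def by simp
    qed
    then obtain j where "GG (\<sigma> r) (lv (a s) j) + 2 \<le> lv (a s) (Suc j)" unfolding H_def by blast
    then show ?thesis unfolding x_def by (rule pt_cov)
  qed
  have injx: "inj x"
  proof (rule injI)
    fix s s' assume "x s = x s'"
    then have e: "lv (a s) = lv (a s')" unfolding x_def by (rule pt_inj[OF gap_lv gap_lv])
    have par: "(q j < s) = (q j < s')" for j
    proof -
      have "a s j (lv (a s) j) = a s' j (lv (a s) j)" by (rule lv_eq_a[OF e])
      then have "a s j (lv (a s) j) mod 2 = a s' j (lv (a s) j) mod 2" by simp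
      then show ?thesis unfolding a_def by (auto split: if_splits)
    qed
    show "s = s'"
    proof (rule ccontr)
      assume "s \<noteq> s'"
      then have "s < s' \<or> s' < s" by auto
      then obtain u v where uv: "u < v" "(\<forall>j. (q j < u) = (q j < v))"
        using par by metis
      obtain t where t: "t \<in> \<rat>" "u < t" "t < v" using Rats_dense_in_real[OF uv(1)] by blast
      obtain b where b: "t = of_rat b" using t(1) by (auto elim: Rats_cases)
      obtain j where "b = nat_to_rat_surj j" using surj_nat_to_rat_surj by (metis surj_def)
      then have "q j = t" unfolding q_def b by simp
      moreover have "(q j < u) = (q j < v)" using uv(2) by blast
      ultimately show False using t by simp
    qed
  qed
  have smz: "strong_measure_zero (range x)"
  proof (rule smz_red)
    fix g :: "nat \<Rightarrow> nat"
    define r where "r = \<iota> g"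
    have sr: "\<sigma> r = g" unfolding r_def by (rule \<sigma>\<iota>)
    have "x ` underS ?W r \<prec> (UNIV::real set)"
      by (rule lesspoll_trans1[OF image_lepoll underS_lesspoll])
    then have "strong_measure_zero (x ` underS ?W r)" using assms(1) unfolding Unif_S_def by blast
    then have "\<exists>y1. x ` underS ?W r \<subseteq> (\<Union>i. {y1 i - (1/2::real)^(g (2*i+1)) <..< y1 i + (1/2)^(g (2*i+1))})"
      unfolding strong_measure_zero_def
      by (drule_tac x="\<lambda>i. (1/2::real)^(g (2*i+1))" in spec) simp
    then obtain y1 where y1: "x ` underS ?W r \<subseteq> (\<Union>i. {y1 i - (1/2)^(g (2*i+1)) <..< y1 i + (1/2)^(g (2*i+1))})"
      by blast
    have B: "x ` {s. s \<notin> underS ?W r} \<subseteq> (\<Union>i. {ctr i - (1/2)^(g (2*i)) <..< ctr i + (1/2)^(g (2*i))})"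
    proof -
      have "x ` {s. s \<notin> underS ?W r} \<subseteq> Cov (\<sigma> r)"
      proof
        fix t assume "t \<in> x ` {s. s \<notin> underS ?W r}"
        then obtain s where s: "s \<notin> underS ?W r" "t = x s" by blast
        have "r \<in> underS ?W s \<or> r = s" using W_total[OF _ s(1)] by blast
        then show "t \<in> Cov (\<sigma> r)" using cov s(2) by blast
      qed
      then show ?thesis using Cov_sub[of g] sr by simp
    qed
    obtain z where z: "x ` underS ?W r \<union> x ` {s. s \<notin> underS ?W r} \<subseteq> (\<Union>i. {z i - (1/2)^(g i) <..< z i + (1/2)^(g i)})"
      using combine[where e="\<lambda>i. (1/2::real)^(g i)", OF y1 B] by blast
    have "range x \<subseteq> x ` underS ?W r \<union> x ` {s. s \<notin> underS ?W r}" by blast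
    then show "\<exists>y. range x \<subseteq> (\<Union>i. {y i - (1/2)^(g i) <..< y i + (1/2)^(g i)})"
      using z by blast
  qed
  have "range x \<approx> (UNIV :: real set)"
    using inj_on_image_eqpoll_self[OF injx] .
  with smz show ?thesis by blast
qed

end
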